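(* Let $G$ be a finite bipartite graph having a nonempty channel $C$. Then to each perfect matching $\mu$ of $G$ one can assign a nonempty set of edges $S(\mu)\subseteq E$ such that: (i) $S(\mu)$ is a simple cycle of even length; (ii) every second edge of $S(\mu)$ lies in $\mu$; (iii) $S(\mu)$ depends only on the edges of $\mu$ that contain a vertex of $C$; (iv) if $\mu'$ is a perfect matching with $S(\mu)=\mu\oplus\mu'$ (symmetric difference), then $S(\mu')=S(\mu)$.
   Context: A channel of a graph $G=(V,E)$ is a set $C\subseteq V$ such that every vertex of $G$ is adjacent to an even number of vertices of $C$. *)

theory Defs
  imports Main
begin

definition simple_graph :: "'a set \<Rightarrow> 'a set set \<Rightarrow> bool" where
  "simple_graph V E \<longleftrightarrow> finite V \<and> (\<forall>e\<in>E. e \<subseteq> V \<and> card e = 2)"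

definition bipartite :: "'a set \<Rightarrow> 'a set set \<Rightarrow> bool" where
  "bipartite V E \<longleftrightarrow> (\<exists>X Y. X \<union> Y = V \<and> X \<inter> Y = {} \<and>
      (\<forall>e\<in>E. \<exists>x y. x \<in> X \<and> y \<in> Y \<and> e = {x, y}))"

definition channel :: "'a set \<Rightarrow> 'a set set \<Rightarrow> 'a set \<Rightarrow> bool" where
  "channel V E C \<longleftrightarrow> C \<subseteq> V \<and> (\<forall>v\<in>V. even (card {u\<in>C. {u, v} \<in> E}))"

definition perfect_matching :: "'a set \<Rightarrow> 'a set set \<Rightarrow> 'a set set \<Rightarrow> bool" where
  "perfect_matching V E M \<longleftrightarrow> M \<subseteq> E \<and> (\<forall>v\<in>V. \<exists>!e. e \<in> M \<and> v \<in> e)"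

definition cycle_edges :: "'a list \<Rightarrow> 'a set set" where
  "cycle_edges xs = {{xs ! i, xs ! ((i + 1) mod length xs)} | i. i < length xs}"

definition simple_cycle :: "'a set \<Rightarrow> 'a set set \<Rightarrow> 'a list \<Rightarrow> bool" where
  "simple_cycle V E xs \<longleftrightarrow> distinct xs \<and> length xs \<ge> 3 \<and> set xs \<subseteq> V \<and>
     (\<forall>i < length xs. {xs ! i, xs ! ((i + 1) mod length xs)} \<in> E)"

definition sym_diff :: "'b set \<Rightarrow> 'b set \<Rightarrow> 'b set" where
  "sym_diff A B = (A - B) \<union> (B - A)"

end

theory Submission imports Defs begin
definition rho :: "('a \<Rightarrow> 'a) \<Rightarrow> 'a \<Rightarrow> 'a list \<Rightarrow> 'a list \<Rightarrow> bool" where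
"rho f c0 ts cs \<longleftrightarrow> distinct (ts@cs) \<and> cs \<noteq> [] \<and>
   (\<forall>i<length (ts@cs). (f^^i) c0 = (ts@cs)!i) \<and> (f^^(length (ts@cs))) c0 = cs!0"

lemma rho_len:
  assumes "rho f c ts cs" "rho f c ts' cs'"
  shows "\<not> length(ts@cs) < length(ts'@cs')"
proof
  assume lt: "length(ts@cs) < length(ts'@cs')"
  let ?n = "length(ts@cs)"
  have a: "(f^^?n) c = cs!0" using assms(1) unfolding rho_def by blast
  have "cs \<noteq> []" using assms(1) unfolding rho_def by blast
  hence lts: "length ts < ?n" by simp
  have b: "(f^^(length ts)) c = (ts@cs)!(length ts)" using assms(1) lts unfolding rho_def by blast
  have "(ts@cs)!(length ts) = cs!0" by (simp add: nth_append)
  hence e: "(f^^?n) c = (f^^(length ts)) c" using a b by simp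
  have d: "distinct (ts'@cs')" and all: "\<forall>i<length (ts'@cs'). (f^^i) c = (ts'@cs')!i"
    using assms(2) unfolding rho_def by blast+
  have "(ts'@cs')!?n = (ts'@cs')!(length ts)" using e all lt lts by simp
  hence "?n = length ts" using d lt lts nth_eq_iff_index_eq by (metis order.strict_trans)
  thus False using lts by simp
qed

lemma rho_unique:
  assumes "rho f c ts cs" "rho f c ts' cs'"
  shows "ts = ts' \<and> cs = cs'"
proof -
  have len: "length(ts@cs) = length(ts'@cs')" using rho_len[OF assms] rho_len[OF assms(2,1)] by linarith
  have l: "ts@cs = ts'@cs'"
  proof (rule nth_equalityI)
    fix i assume "i < length (ts@cs)"
    thus "(ts@cs)!i = (ts'@cs')!i" using assms len unfolding rho_def by metis
  qed (rule len)
  have "(f^^(length (ts@cs))) c = cs!0" "(f^^(length (ts'@cs'))) c = cs'!0"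
    using assms unfolding rho_def by blast+
  moreover have "(ts@cs)!(length ts) = cs!0" "(ts'@cs')!(length ts') = cs'!0" by (simp_all add: nth_append)
  ultimately have "(ts@cs)!(length ts) = (ts@cs)!(length ts')" using l len by simp
  moreover have "distinct (ts@cs)" "cs \<noteq> []" "cs' \<noteq> []" using assms unfolding rho_def by blast+
  moreover have "length ts' < length (ts@cs)" using len \<open>cs' \<noteq> []\<close> by simp
  moreover have "length ts < length (ts@cs)" using \<open>cs \<noteq> []\<close> by simp
  ultimately have "length ts = length ts'" using nth_eq_iff_index_eq[of "ts@cs" "length ts" "length ts'"] by blast
  thus ?thesis using l by simp
qed

lemma pow_in: "(\<forall>x\<in>A. f x \<in> A) \<Longrightarrow> c \<in> A \<Longrightarrow> (f^^i) c \<in> A"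
  by (induction i) auto

lemma rho_exists:
  assumes fin: "finite A" and cl: "\<forall>x\<in>A. f x \<in> A" and c: "c \<in> A"
  shows "\<exists>ts cs. rho f c ts cs"
proof -
  define s where "s i = (f^^i) c" for i
  have sA: "s i \<in> A" for i using pow_in[OF cl c] s_def by simp
  have "\<not> inj_on s {0..card A}"
  proof
    assume "inj_on s {0..card A}"
    hence "card (s ` {0..card A}) = card A + 1" by (simp add: card_image)
    moreover have "s ` {0..card A} \<subseteq> A" using sA by auto
    ultimately show False using card_mono[OF fin, of "s ` {0..card A}"] by linarith
  qed
  then obtain a b where ab: "a \<noteq> b" "s a = s b" unfolding inj_on_def by blast
  define P where "P n = (\<exists>j<n. s j = s n)" for n
  have "\<exists>n. P n" using ab unfolding P_def by (metis linorder_neqE_nat)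
  define n where "n = (LEAST n. P n)"
  have Pn: "P n" unfolding n_def using \<open>\<exists>n. P n\<close> by (metis LeastI)
  then obtain j where j: "j < n" "s j = s n" unfolding P_def by blast
  have dist: "distinct (map s [0..<n])"
  proof (rule ccontr)
    assume "\<not> distinct (map s [0..<n])"
    then obtain a b where "a < b" "b < n" "s a = s b"
      unfolding distinct_conv_nth by (auto, metis linorder_neqE_nat)
    hence "P b" unfolding P_def by blast
    hence "n \<le> b" unfolding n_def by (rule Least_le)
    thus False using \<open>b < n\<close> by simp
  qed
  define ts where "ts = map s [0..<j]"
  define cs where "cs = map s [j..<n]"
  have tc: "ts @ cs = map s [0..<n]"
  proof -
    have "[0..<n] = [0..<j] @ [j..<j + (n - j)]" using upt_add_eq_append[of 0 j "n-j"] j(1) by simp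
    thus ?thesis using j(1) by (simp add: ts_def cs_def)
  qed
  have "rho f c ts cs" unfolding rho_def tc
    using dist j by (auto simp: s_def cs_def)
  thus ?thesis by blast
qed

lemma rho_pow: "rho f c ts cs \<Longrightarrow> i < length (ts@cs) \<Longrightarrow> (f^^i) c = (ts@cs)!i"
  unfolding rho_def by blast

lemma rho_step_cs:
  assumes r: "rho f c ts cs" and j: "j < length cs"
  shows "f (cs!j) = cs!(Suc j mod length cs)"
proof -
  have "cs!j = (ts@cs)!(length ts + j)" by (simp add: nth_append)
  also have "\<dots> = (f^^(length ts + j)) c" using rho_pow[OF r] j by simp
  finally have "f (cs!j) = (f^^(Suc (length ts + j))) c" by simp
  show ?thesis
  proof (cases "Suc j < length cs")
    case True
    hence "(f^^(Suc (length ts + j))) c = (ts@cs)!(length ts + Suc j)"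
      using rho_pow[OF r, of "Suc (length ts + j)"] by simp
    thus ?thesis using \<open>f (cs!j) = _\<close> True by (simp add: nth_append)
  next
    case False
    hence "Suc j = length cs" using j by simp
    hence "Suc (length ts + j) = length (ts@cs)" by simp
    hence "(f^^(Suc (length ts + j))) c = cs!0" using r unfolding rho_def by metis
    thus ?thesis using \<open>f (cs!j) = _\<close> \<open>Suc j = length cs\<close> by simp
  qed
qed

lemma rho_step_ts:
  assumes r: "rho f c ts cs" and i: "i < length ts"
  shows "f (ts!i) = (ts@cs)!(Suc i)"
proof -
  have ne: "cs \<noteq> []" using r unfolding rho_def by blast
  have "ts!i = (f^^i) c" using rho_pow[OF r, of i] i by (simp add: nth_append)
  hence "f (ts!i) = (f^^(Suc i)) c" by simp
  also have "\<dots> = (ts@cs)!(Suc i)" using rho_pow[OF r, of "Suc i"] i ne by (cases cs) auto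
  finally show ?thesis .
qed

lemma rho_set:
  assumes r: "rho f c ts cs" and cl: "\<forall>x\<in>A. f x \<in> A" and c: "c \<in> A"
  shows "set (ts@cs) \<subseteq> A"
proof
  fix x assume "x \<in> set (ts@cs)"
  then obtain i where "i < length (ts@cs)" "x = (ts@cs)!i" using in_set_conv_nth[of x "ts@cs"] by metis
  thus "x \<in> A" using rho_pow[OF r] pow_in[OF cl c] by metis
qed

lemma rho_intro:
  assumes d: "distinct (ts@cs)" and ne: "cs \<noteq> []" and h: "(ts@cs)!0 = c"
    and st: "\<forall>i<length (ts@cs). f ((ts@cs)!i) = (if Suc i < length (ts@cs) then (ts@cs)!(Suc i) else cs!0)"
  shows "rho f c ts cs"
proof -
  have p: "i < length (ts@cs) \<Longrightarrow> (f^^i) c = (ts@cs)!i" for i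
  proof (induction i)
    case 0 thus ?case using h by simp
  next
    case (Suc i)
    hence "(f^^i) c = (ts@cs)!i" by simp
    thus ?case using st Suc.prems by simp
  qed
  define n where "n = length (ts@cs)"
  have n0: "n > 0" using ne n_def by simp
  have "(f^^n) c = f ((f^^(n - 1)) c)" using n0 by (metis Suc_diff_1 funpow.simps(2) o_apply)
  also have "\<dots> = f ((ts@cs)!(n-1))" using p n0 n_def by simp
  also have "\<dots> = cs!0" using st n0 n_def by (metis Suc_diff_1 diff_less less_irrefl zero_less_one)
  finally have last: "(f^^(length (ts@cs))) c = cs!0" using n_def by simp
  have all: "\<forall>i<length (ts@cs). (f^^i) c = (ts@cs)!i" using p by blast
  show ?thesis unfolding rho_def using d ne all last by (intro conjI)
qed

lemma invol_exists:
  assumes "finite A" "even (card A)"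
  shows "\<exists>g. \<forall>u\<in>A. g u \<in> A \<and> g u \<noteq> u \<and> g (g u) = u"
  using assms
proof (induction "card A" arbitrary: A rule: less_induct)
  case less
  show ?case
  proof (cases "A = {}")
    case True thus ?thesis by simp
  next
    case False
    then obtain a where a: "a \<in> A" by blast
    have "card A \<noteq> 1" using less.prems(2) by (metis odd_one)
    moreover have "card A > 0" using False less.prems(1) by (simp add: card_gt_0_iff)
    ultimately have "card A \<ge> 2" by linarith
    have "A - {a} \<noteq> {}"
    proof
      assume "A - {a} = {}"
      hence "A = {a}" using a by blast
      thus False using \<open>card A \<ge> 2\<close> by simp
    qed
    then obtain b where b: "b \<in> A" "b \<noteq> a" by blast
    define A' where "A' = A - {a, b}"
    have cA': "card A' = card A - 2" unfolding A'_def using a b less.prems(1)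
      by (simp add: card_Diff_subset)
    hence "card A' < card A" using \<open>card A \<ge> 2\<close> by simp
    moreover have "finite A'" using less.prems(1) A'_def by simp
    moreover have "even (card A')" using less.prems(2) cA' by presburger
    ultimately obtain g where g: "\<forall>u\<in>A'. g u \<in> A' \<and> g u \<noteq> u \<and> g (g u) = u"
      using less.hyps by blast
    define h where "h = g(a := b, b := a)"
    have "\<forall>u\<in>A. h u \<in> A \<and> h u \<noteq> u \<and> h (h u) = u"
    proof
      fix u assume u: "u \<in> A"
      show "h u \<in> A \<and> h u \<noteq> u \<and> h (h u) = u"
      proof (cases "u = a \<or> u = b")
        case True thus ?thesis using a b by (auto simp: h_def)
      next
        case False
        hence "u \<in> A'" using u A'_def by simp
        hence "g u \<in> A'" "g u \<noteq> u" "g (g u) = u" using g by auto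
        thus ?thesis using False A'_def by (auto simp: h_def)
      qed
    qed
    thus ?thesis by blast
  qed
qed


locale chan =
  fixes V :: "'a set" and E :: "'a set set" and C X Y :: "'a set" and c0 :: 'a
  assumes finV: "finite V" and XYV: "X \<union> Y = V" and XY: "X \<inter> Y = {}"
    and edges: "\<forall>e\<in>E. \<exists>x y. x \<in> X \<and> y \<in> Y \<and> e = {x, y}"
    and CV: "C \<subseteq> V" and evn: "\<forall>v\<in>V. even (card {u\<in>C. {u, v} \<in> E})"
    and c0C: "c0 \<in> C" and c0X: "c0 \<in> X"
begin

lemma edge_XY: "{a, b} \<in> E \<Longrightarrow> a \<in> X \<Longrightarrow> b \<in> Y"
proof -
  assume e: "{a, b} \<in> E" and a: "a \<in> X"
  then obtain x y where xy: "x \<in> X" "y \<in> Y" "{a, b} = {x, y}" using edges by blast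
  hence "(a = x \<and> b = y) \<or> (a = y \<and> b = x)" by (simp add: doubleton_eq_iff)
  thus "b \<in> Y" using xy a XY by blast
qed

lemma edge_YX: "{a, b} \<in> E \<Longrightarrow> a \<in> Y \<Longrightarrow> b \<in> X"
proof -
  assume e: "{a, b} \<in> E" and a: "a \<in> Y"
  then obtain x y where xy: "x \<in> X" "y \<in> Y" "{a, b} = {x, y}" using edges by blast
  hence "(a = x \<and> b = y) \<or> (a = y \<and> b = x)" by (simp add: doubleton_eq_iff)
  thus "b \<in> X" using xy a XY by blast
qed

definition N where "N y = {u\<in>C. {u, y} \<in> E}"

definition pr where "pr y = (SOME g. \<forall>u\<in>N y. g u \<in> N y \<and> g u \<noteq> u \<and> g (g u) = u)"

lemma pr: assumes "y \<in> V" "u \<in> N y"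
  shows "pr y u \<in> N y \<and> pr y u \<noteq> u \<and> pr y (pr y u) = u"
proof -
  have "finite (N y)" using finV CV unfolding N_def by (auto intro: finite_subset)
  moreover have "even (card (N y))" using evn assms(1) unfolding N_def by blast
  ultimately have "\<exists>g. \<forall>u\<in>N y. g u \<in> N y \<and> g u \<noteq> u \<and> g (g u) = u" by (rule invol_exists)
  hence "\<forall>u\<in>N y. pr y u \<in> N y \<and> pr y u \<noteq> u \<and> pr y (pr y u) = u"
    unfolding pr_def by (rule someI_ex)
  thus ?thesis using assms(2) by blast
qed

definition MC where "MC \<mu> = {e\<in>\<mu>. e \<inter> C \<noteq> {}}"
definition mt where "mt M c = (SOME u. {c, u} \<in> M)"
definition nx where "nx M c = pr (mt M c) c"

definition SS where "SS M = (let cs = snd (SOME p. rho (nx M) c0 (fst p) (snd p)) in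
   {{c, mt M c} | c. c \<in> set cs} \<union> {{mt M c, nx M c} | c. c \<in> set cs})"

context
  fixes \<mu> assumes pm: "perfect_matching V E \<mu>"
begin

lemma muE: "\<mu> \<subseteq> E" using pm unfolding perfect_matching_def by blast

lemma edge_uniq: "v \<in> V \<Longrightarrow> {v, a} \<in> \<mu> \<Longrightarrow> {v, b} \<in> \<mu> \<Longrightarrow> a = b"
proof -
  assume v: "v \<in> V" and a: "{v, a} \<in> \<mu>" and b: "{v, b} \<in> \<mu>"
  have "\<exists>!e. e \<in> \<mu> \<and> v \<in> e" using pm v unfolding perfect_matching_def by blast
  hence "{v, a} = {v, b}" using a b by blast
  hence "a \<in> {v, b}" "b \<in> {v, a}" by blast+
  thus "a = b" by blast
qed

lemma mt_in: assumes c: "c \<in> C" shows "{c, mt (MC \<mu>) c} \<in> \<mu>"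
proof -
  have cV: "c \<in> V" using c CV by blast
  then obtain e where e: "e \<in> \<mu>" "c \<in> e" using pm unfolding perfect_matching_def by blast
  then obtain x y where "e = {x, y}" using muE edges by blast
  hence "\<exists>u. e = {c, u}" using e(2) by blast
  then obtain u where "e = {c, u}" by blast
  hence "{c, u} \<in> MC \<mu>" using e c unfolding MC_def by blast
  hence "{c, mt (MC \<mu>) c} \<in> MC \<mu>" unfolding mt_def by (rule someI)
  thus ?thesis unfolding MC_def by blast
qed

lemma mt_uniq: "c \<in> C \<Longrightarrow> {c, u} \<in> \<mu> \<Longrightarrow> u = mt (MC \<mu>) c"
  using edge_uniq mt_in CV by blast

lemma mt_Y: "c \<in> C \<Longrightarrow> c \<in> X \<Longrightarrow> mt (MC \<mu>) c \<in> Y"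
  using mt_in muE edge_XY by blast

lemma mt_inj: "a \<in> C \<Longrightarrow> b \<in> C \<Longrightarrow> a \<in> X \<Longrightarrow> mt (MC \<mu>) a = mt (MC \<mu>) b \<Longrightarrow> a = b"
proof -
  assume a: "a \<in> C" and b: "b \<in> C" and aX: "a \<in> X" and eq: "mt (MC \<mu>) a = mt (MC \<mu>) b"
  let ?y = "mt (MC \<mu>) a"
  have yV: "?y \<in> V" using mt_Y[OF a aX] XYV by blast
  have "{?y, a} \<in> \<mu>" using mt_in[OF a] by (simp add: insert_commute)
  moreover have "{?y, b} \<in> \<mu>" using mt_in[OF b] eq by (simp add: insert_commute)
  ultimately show "a = b" using edge_uniq[OF yV] by blast
qed

lemma nx: assumes c: "c \<in> C" and cX: "c \<in> X"
  shows "nx (MC \<mu>) c \<in> C \<and> nx (MC \<mu>) c \<in> X \<and> nx (MC \<mu>) c \<noteq> c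
     \<and> pr (mt (MC \<mu>) c) (nx (MC \<mu>) c) = c \<and> {nx (MC \<mu>) c, mt (MC \<mu>) c} \<in> E"
proof -
  let ?y = "mt (MC \<mu>) c"
  have yY: "?y \<in> Y" using mt_Y[OF c cX] .
  hence yV: "?y \<in> V" using XYV by blast
  have "c \<in> N ?y" unfolding N_def using c mt_in[OF c] muE by auto
  from pr[OF yV this] have p: "pr ?y c \<in> N ?y" "pr ?y c \<noteq> c" "pr ?y (pr ?y c) = c" by blast+
  have e: "{pr ?y c, ?y} \<in> E" "pr ?y c \<in> C" using p(1) unfolding N_def by blast+
  have "pr ?y c \<in> X" using edge_YX[of ?y "pr ?y c"] e(1) yY by (simp add: insert_commute)
  thus ?thesis using p e unfolding nx_def by blast
qed

lemma rho_ex: "\<exists>ts cs. rho (nx (MC \<mu>)) c0 ts cs"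
proof (rule rho_exists[of "C \<inter> X"])
  show "finite (C \<inter> X)" using finV CV by (auto intro: finite_subset)
  show "\<forall>x\<in>C \<inter> X. nx (MC \<mu>) x \<in> C \<inter> X" using nx by blast
  show "c0 \<in> C \<inter> X" using c0C c0X by blast
qed

lemma SS_eq: assumes r: "rho (nx (MC \<mu>)) c0 ts cs"
  shows "SS (MC \<mu>) = {{c, mt (MC \<mu>) c} | c. c \<in> set cs} \<union> {{mt (MC \<mu>) c, nx (MC \<mu>) c} | c. c \<in> set cs}"
proof -
  let ?P = "\<lambda>p. rho (nx (MC \<mu>)) c0 (fst p) (snd p)"
  have "?P (ts, cs)" using r by simp
  hence "?P (SOME p. ?P p)" by (rule someI)
  hence "snd (SOME p. ?P p) = cs" using rho_unique[OF _ r] by blast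
  thus ?thesis unfolding SS_def Let_def by simp
qed

lemma rho_CX: "rho (nx (MC \<mu>)) c0 ts cs \<Longrightarrow> set (ts@cs) \<subseteq> C \<inter> X"
  by (rule rho_set[of _ _ _ _ "C \<inter> X"]) (use nx c0C c0X in auto)

lemma rho_len2: assumes r: "rho (nx (MC \<mu>)) c0 ts cs" shows "length cs \<ge> 2"
proof (rule ccontr)
  assume "\<not> length cs \<ge> 2"
  moreover have "cs \<noteq> []" using r unfolding rho_def by blast
  ultimately have L: "length cs = 1" by (simp add: Suc_leI le_antisym)
  have "nx (MC \<mu>) (cs!0) = cs!(Suc 0 mod length cs)" using rho_step_cs[OF r] L by simp
  hence "nx (MC \<mu>) (cs!0) = cs!0" using L by simp
  moreover have "cs!0 \<in> C \<inter> X" using rho_CX[OF r] L by (cases cs) auto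
  ultimately show False using nx by blast
qed

end

end

lemma ce_mem: "i < length xs \<Longrightarrow> {xs!i, xs!((i+1) mod length xs)} \<in> cycle_edges xs"
  unfolding cycle_edges_def by blast

context chan begin
context
  fixes \<mu> assumes pm: "perfect_matching V E \<mu>"
begin

lemma part1: assumes r: "rho (nx (MC \<mu>)) c0 ts cs"
  shows "\<exists>xs. simple_cycle V E xs \<and> even (length xs) \<and> SS (MC \<mu>) = cycle_edges xs \<and>
     (\<forall>i < length xs. even i \<longrightarrow> {xs ! i, xs ! ((i + 1) mod length xs)} \<in> \<mu>)"
proof -
  define f where "f = nx (MC \<mu>)"
  define m where "m = mt (MC \<mu>)"
  define L where "L = length cs"
  define xs where "xs = map (\<lambda>i. if even i then cs!(i div 2) else m (cs!(i div 2))) [0..<2*L]"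
  have len: "length xs = 2*L" unfolding xs_def by simp
  have nth: "i < 2*L \<Longrightarrow> xs!i = (if even i then cs!(i div 2) else m (cs!(i div 2)))" for i
    unfolding xs_def by simp
  have L2: "L \<ge> 2" using rho_len2[OF pm r] L_def by simp
  have CX: "j < L \<Longrightarrow> cs!j \<in> C \<and> cs!j \<in> X" for j
    using rho_CX[OF pm r] L_def by (auto simp: nth_mem)
  have fstep: "j < L \<Longrightarrow> f (cs!j) = cs!(Suc j mod L)" for j
    using rho_step_cs[OF r] f_def L_def by simp
  have ec: "{xs!i, xs!((i+1) mod (2*L))} = (if even i then {cs!(i div 2), m (cs!(i div 2))}
            else {m (cs!(i div 2)), f (cs!(i div 2))})" if i: "i < 2*L" for i
  proof (cases "even i")
    case True
    hence "i + 1 < 2*L" using i by presburger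
    hence "(i+1) mod (2*L) = i + 1" by simp
    moreover have "odd (i+1)" "(i+1) div 2 = i div 2" using True by presburger+
    ultimately show ?thesis using True nth[OF i] nth[OF \<open>i+1 < 2*L\<close>] by simp
  next
    case False
    define j where "j = i div 2"
    have ij: "i = 2*j + 1" using False j_def by presburger
    have jL: "j < L" using i ij by linarith
    have "i+1 = 2 * Suc j" using ij by simp
    hence "(i+1) mod (2*L) = 2 * (Suc j mod L)" by (simp only: mod_mult_mult1)
    moreover have "2 * (Suc j mod L) < 2*L" using L2 by simp
    ultimately have "xs!((i+1) mod (2*L)) = cs!(Suc j mod L)" using nth by simp
    thus ?thesis using False nth[OF i] fstep[OF jL] j_def by simp
  qed
  have dist: "distinct xs"
  proof (rule distinct_conv_nth[THEN iffD2], intro allI impI)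
    fix i k assume ik: "i < length xs" "k < length xs" "i \<noteq> k"
    show "xs!i \<noteq> xs!k"
    proof
      assume eq: "xs!i = xs!k"
      have i2: "i div 2 < L" "k div 2 < L" using ik len by auto
      have dcs: "distinct cs" using r unfolding rho_def by simp
      consider "even i" "even k" | "odd i" "odd k" | "even i" "odd k" | "odd i" "even k" by blast
      thus False
      proof cases
        case 1
        hence "cs!(i div 2) = cs!(k div 2)" using eq nth ik len by simp
        hence "i div 2 = k div 2" using dcs i2 L_def nth_eq_iff_index_eq by metis
        thus False using 1 ik(3) by presburger
      next
        case 2
        hence "m (cs!(i div 2)) = m (cs!(k div 2))" using eq nth ik len by simp
        hence "cs!(i div 2) = cs!(k div 2)" using mt_inj[OF pm, of "cs!(i div 2)" "cs!(k div 2)"] CX[OF i2(1)] CX[OF i2(2)] m_def by simp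
        hence "i div 2 = k div 2" using dcs i2 L_def nth_eq_iff_index_eq by metis
        thus False using 2 ik(3) by presburger
      next
        case 3
        hence "cs!(i div 2) = m (cs!(k div 2))" using eq nth ik len by simp
        moreover have "m (cs!(k div 2)) \<in> Y" using mt_Y[OF pm, of "cs!(k div 2)"] CX[OF i2(2)] m_def by simp
        ultimately have "m (cs!(k div 2)) \<in> X \<inter> Y" using CX[OF i2(1)] by simp
        thus False using XY by simp
      next
        case 4
        hence "m (cs!(i div 2)) = cs!(k div 2)" using eq nth ik len by simp
        moreover have "m (cs!(i div 2)) \<in> Y" using mt_Y[OF pm, of "cs!(i div 2)"] CX[OF i2(1)] m_def by simp
        ultimately have "m (cs!(i div 2)) \<in> X \<inter> Y" using CX[OF i2(2)] by simp
        thus False using XY by simp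
      qed
    qed
  qed
  have inmu: "j < L \<Longrightarrow> {cs!j, m (cs!j)} \<in> \<mu>" for j using mt_in[OF pm] CX m_def by blast
  have inE2: "j < L \<Longrightarrow> {m (cs!j), f (cs!j)} \<in> E" for j
    using nx[OF pm] CX f_def m_def by (metis insert_commute)
  have edgesE: "\<forall>i<length xs. {xs!i, xs!((i+1) mod length xs)} \<in> E"
  proof (intro allI impI)
    fix i assume "i < length xs"
    hence i: "i < 2*L" "i div 2 < L" using len by auto
    show "{xs!i, xs!((i+1) mod length xs)} \<in> E"
      using ec[OF i(1)] len inmu[OF i(2)] inE2[OF i(2)] muE[OF pm] by (auto split: if_splits)
  qed
  have setV: "set xs \<subseteq> V"
  proof
    fix x assume "x \<in> set xs"
    then obtain i where i: "i < length xs" "x = xs!i" by (metis in_set_conv_nth)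
    hence "i div 2 < L" using len by auto
    hence "cs!(i div 2) \<in> C \<and> cs!(i div 2) \<in> X" using CX by blast
    hence "cs!(i div 2) \<in> V" "m (cs!(i div 2)) \<in> V"
      using CV mt_Y[OF pm, of "cs!(i div 2)"] XYV m_def by auto
    thus "x \<in> V" using i nth len by simp
  qed
  have sc: "simple_cycle V E xs" unfolding simple_cycle_def
    using dist setV edgesE len L2 by simp
  have SS: "SS (MC \<mu>) = {{c, m c} | c. c \<in> set cs} \<union> {{m c, f c} | c. c \<in> set cs}"
    using SS_eq[OF pm r] f_def m_def by simp
  have ce: "SS (MC \<mu>) = cycle_edges xs"
  proof
    show "SS (MC \<mu>) \<subseteq> cycle_edges xs"
    proof
      fix e assume "e \<in> SS (MC \<mu>)"
      then obtain c where c: "c \<in> set cs" "e = {c, m c} \<or> e = {m c, f c}" using SS by blast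
      then obtain j where j: "j < L" "c = cs!j" using L_def by (metis in_set_conv_nth)
      show "e \<in> cycle_edges xs"
      proof (cases "e = {c, m c}")
        case True
        have "2*j < 2*L" "even (2*j)" "2*j div 2 = j" using j by auto
        hence "e = {xs!(2*j), xs!((2*j+1) mod length xs)}" using ec[of "2*j"] True j len by simp
        thus ?thesis using ce_mem[of "2*j" xs] \<open>2*j < 2*L\<close> len by simp
      next
        case False
        hence eq: "e = {m c, f c}" using c by blast
        have "2*j+1 < 2*L" "odd (2*j+1)" "(2*j+1) div 2 = j" using j by auto
        hence "e = {xs!(2*j+1), xs!((2*j+1+1) mod length xs)}" using ec[of "2*j+1"] eq j len by simp
        thus ?thesis using ce_mem[of "2*j+1" xs] \<open>2*j+1 < 2*L\<close> len by simp
      qed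
    qed
  next
    show "cycle_edges xs \<subseteq> SS (MC \<mu>)"
    proof
      fix e assume "e \<in> cycle_edges xs"
      then obtain i where i: "i < 2*L" "e = {xs!i, xs!((i+1) mod (2*L))}"
        unfolding cycle_edges_def using len by auto
      have "cs!(i div 2) \<in> set cs" using i L_def by auto
      thus "e \<in> SS (MC \<mu>)" using ec[OF i(1)] i(2) SS by (auto split: if_splits)
    qed
  qed
  have mu: "\<forall>i < length xs. even i \<longrightarrow> {xs ! i, xs ! ((i + 1) mod length xs)} \<in> \<mu>"
    using ec len inmu by auto
  show ?thesis using sc ce mu len by auto
qed

end
end

lemma arith1: assumes "k < (L::nat)" "2 \<le> L"
  shows "Suc ((L - Suc k mod L) mod L) mod L = (L - k) mod L"
proof (cases "Suc k < L")
  case True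
  hence a: "Suc k mod L = Suc k" by simp
  have b: "(L - Suc k) mod L = L - Suc k" using True by simp
  have c: "Suc (L - Suc k) = L - k" using True by simp
  show ?thesis using a b c by simp
next
  case False
  hence "Suc k = L" using assms by simp
  thus ?thesis using assms by auto
qed

lemma rev_nth_lemma: assumes "cs \<noteq> []" "i < length cs"
  shows "(hd cs # rev (tl cs))!i = cs!((length cs - i) mod length cs)"
proof (cases cs)
  case Nil thus ?thesis using assms by simp
next
  case (Cons a r)
  show ?thesis
  proof (cases i)
    case 0 thus ?thesis using Cons by simp
  next
    case (Suc i')
    have i': "i' < length r" using assms Cons Suc by simp
    have "(hd cs # rev (tl cs))!i = rev r ! i'" using Cons Suc by simp
    also have "\<dots> = r!(length r - Suc i')" using i' by (simp add: rev_nth)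
    also have "\<dots> = cs!(Suc (length r - Suc i'))" using Cons by simp
    also have "Suc (length r - Suc i') = (length cs - i) mod length cs"
      using Cons Suc i' by simp
    finally show ?thesis .
  qed
qed

context chan begin

lemma part4:
  assumes pm: "perfect_matching V E \<mu>" and pm': "perfect_matching V E \<mu>'"
    and eqS: "SS (MC \<mu>) = sym_diff \<mu> \<mu>'"
  shows "SS (MC \<mu>') = SS (MC \<mu>)"
proof -
  define f where "f = nx (MC \<mu>)"
  define m where "m = mt (MC \<mu>)"
  define f' where "f' = nx (MC \<mu>')"
  define m' where "m' = mt (MC \<mu>')"
  obtain ts cs where r: "rho f c0 ts cs" using rho_ex[OF pm] f_def by blast
  define L where "L = length cs"
  have L2: "L \<ge> 2" using rho_len2[OF pm] r f_def L_def by simp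
  have dtc: "distinct (ts@cs)" and ne: "cs \<noteq> []" using r unfolding rho_def by blast+
  have SX: "set (ts@cs) \<subseteq> C \<inter> X" using rho_CX[OF pm] r f_def by simp
  have S: "SS (MC \<mu>) = {{c, m c} | c. c \<in> set cs} \<union> {{m c, f c} | c. c \<in> set cs}"
    using SS_eq[OF pm] r f_def m_def by simp
  have fcl: "c \<in> set cs \<Longrightarrow> f c \<in> set cs" for c
  proof -
    assume "c \<in> set cs"
    then obtain j where j: "j < L" "c = cs!j" using L_def by (metis in_set_conv_nth)
    hence "f c = cs!(Suc j mod L)" using rho_step_cs[OF r] L_def by simp
    moreover have "Suc j mod L < L" using L2 by simp
    ultimately show "f c \<in> set cs" using L_def by simp
  qed
  have claimA: "m' (f d) = m d \<and> f' (f d) = d" if d: "d \<in> set cs" for d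
  proof -
    have dCX: "d \<in> C" "d \<in> X" using d SX by auto
    have fd: "f d \<in> C" "f d \<in> X" "f d \<noteq> d" "pr (m d) (f d) = d"
      using nx[OF pm dCX] f_def m_def by auto
    have inS: "{f d, m d} \<in> SS (MC \<mu>)" using S d by (auto simp: insert_commute)
    have "{f d, m d} \<notin> \<mu>"
    proof
      assume "{f d, m d} \<in> \<mu>"
      hence "m d = m (f d)" using mt_uniq[OF pm fd(1)] m_def by simp
      hence "d = f d" using mt_inj[OF pm dCX(1) fd(1) dCX(2)] m_def by simp
      thus False using fd(3) by simp
    qed
    hence "{f d, m d} \<in> \<mu>'" using inS eqS unfolding sym_diff_def by blast
    hence "m d = m' (f d)" using mt_uniq[OF pm' fd(1)] m'_def by simp
    moreover have "f' (f d) = pr (m' (f d)) (f d)" unfolding f'_def nx_def m'_def by simp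
    ultimately show ?thesis using fd(4) by simp
  qed
  have claimB: "f' t = f t" if t: "t \<in> set ts" for t
  proof -
    have tCX: "t \<in> C" "t \<in> X" using t SX by auto
    have tcs: "t \<notin> set cs" using t dtc by auto
    have emu: "{t, m t} \<in> \<mu>" using mt_in[OF pm tCX(1)] m_def by simp
    have "{t, m t} \<notin> SS (MC \<mu>)"
    proof
      assume "{t, m t} \<in> SS (MC \<mu>)"
      then obtain c where c: "c \<in> set cs" "{t, m t} = {c, m c} \<or> {t, m t} = {m c, f c}"
        using S by blast
      have "c \<in> C" "c \<in> X" using c(1) SX by auto
      hence "m c \<in> Y" using mt_Y[OF pm, of c] m_def by simp
      hence "t \<noteq> m c" using tCX XY by blast
      moreover have "t \<noteq> c" "t \<noteq> f c" using tcs c(1) fcl by auto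
      ultimately show False using c(2) by (auto simp: doubleton_eq_iff)
    qed
    hence "{t, m t} \<in> \<mu>'" using emu eqS unfolding sym_diff_def by blast
    hence "m t = m' t" using mt_uniq[OF pm' tCX(1)] m'_def by simp
    thus ?thesis unfolding f'_def f_def nx_def m'_def m_def by simp
  qed
  define cs' where "cs' = hd cs # rev (tl cs)"
  have lcs': "length cs' = L" using ne L_def cs'_def by (cases cs) auto
  have scs': "set cs' = set cs" using ne cs'_def by (cases cs) auto
  have dcs': "distinct cs'" using ne cs'_def dtc by (cases cs) auto
  have nth': "i < L \<Longrightarrow> cs'!i = cs!((L - i) mod L)" for i
    using rev_nth_lemma[OF ne] cs'_def L_def by simp
  have h0: "cs'!0 = cs!0" using nth' L2 by simp
  have step': "f' (cs'!k) = cs'!(Suc k mod L)" if k: "k < L" for k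
  proof -
    have sk: "Suc k mod L < L" using L2 by simp
    define a where "a = (L - Suc k mod L) mod L"
    have aL: "a < L" using L2 a_def by simp
    have d: "cs'!(Suc k mod L) = cs!a" using nth'[OF sk] a_def by simp
    have "f (cs!a) = cs!(Suc a mod L)" using rho_step_cs[OF r] aL L_def by simp
    also have "Suc a mod L = (L - k) mod L" using arith1[OF k L2] a_def by simp
    also have "cs!((L - k) mod L) = cs'!k" using nth'[OF k] by simp
    finally have "f (cs!a) = cs'!k" .
    moreover have "cs!a \<in> set cs" using aL L_def by simp
    ultimately have "f' (cs'!k) = cs!a" using claimA by metis
    thus ?thesis using d by simp
  qed
  have r': "rho f' c0 ts cs'"
  proof (rule rho_intro)
    show "distinct (ts@cs')" using dtc dcs' scs' by auto
    show "cs' \<noteq> []" using cs'_def by simp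
    have c0: "(ts@cs)!0 = c0" using rho_pow[OF r, of 0] ne by simp
    show "(ts@cs')!0 = c0"
    proof (cases ts)
      case Nil thus ?thesis using c0 h0 by simp
    next
      case (Cons x y) thus ?thesis using c0 by simp
    qed
    show "\<forall>i<length (ts@cs'). f' ((ts@cs')!i) = (if Suc i < length (ts@cs') then (ts@cs')!(Suc i) else cs'!0)"
    proof (intro allI impI)
      fix i assume i: "i < length (ts@cs')"
      show "f' ((ts@cs')!i) = (if Suc i < length (ts@cs') then (ts@cs')!(Suc i) else cs'!0)"
      proof (cases "i < length ts")
        case True
        have "f' ((ts@cs')!i) = f (ts!i)" using True claimB by (simp add: nth_append)
        also have "\<dots> = (ts@cs)!(Suc i)" using rho_step_ts[OF r True] .
        also have "\<dots> = (ts@cs')!(Suc i)" using True h0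
          by (cases "Suc i < length ts") (auto simp: nth_append)
        finally show ?thesis using True lcs' L2 by simp
      next
        case False
        define k where "k = i - length ts"
        have k: "k < L" using i False lcs' k_def by simp
        have "f' ((ts@cs')!i) = cs'!(Suc k mod L)" using step'[OF k] False k_def by (simp add: nth_append)
        show ?thesis
        proof (cases "Suc i < length (ts@cs')")
          case True
          hence "Suc k < L" "Suc k mod L = Suc k" using False k_def lcs' by auto
          moreover have "(ts@cs')!(Suc i) = cs'!(Suc k)" using False True k_def by (simp add: nth_append Suc_diff_le)
          ultimately show ?thesis using True \<open>f' ((ts@cs')!i) = _\<close> by simp
        next
          case F2: False
          hence "Suc k = L" using False k_def lcs' i by simp
          thus ?thesis using F2 \<open>f' ((ts@cs')!i) = _\<close> by simp
        qed
      qed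
    qed
  qed
  have S': "SS (MC \<mu>') = {{c, m' c} | c. c \<in> set cs} \<union> {{m' c, f' c} | c. c \<in> set cs}"
    using SS_eq[OF pm' r'[unfolded f'_def]] f'_def m'_def scs' by simp
  have surj: "f ` set cs = set cs"
  proof (rule endo_inj_surj)
    show "finite (set cs)" by simp
    show "f ` set cs \<subseteq> set cs" using fcl by blast
    show "inj_on f (set cs)" unfolding inj_on_def using claimA by metis
  qed
  show ?thesis
  proof
    show "SS (MC \<mu>') \<subseteq> SS (MC \<mu>)"
    proof
      fix e assume "e \<in> SS (MC \<mu>')"
      then obtain c where c: "c \<in> set cs" "e = {c, m' c} \<or> e = {m' c, f' c}" using S' by blast
      then obtain d where d: "d \<in> set cs" "c = f d" using surj by blast
      have "e = {f d, m d} \<or> e = {m d, d}" using c(2) d claimA by auto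
      thus "e \<in> SS (MC \<mu>)" using S d(1) by (auto simp: insert_commute)
    qed
  next
    show "SS (MC \<mu>) \<subseteq> SS (MC \<mu>')"
    proof
      fix e assume "e \<in> SS (MC \<mu>)"
      then obtain c where c: "c \<in> set cs" "e = {c, m c} \<or> e = {m c, f c}" using S by blast
      have fc: "f c \<in> set cs" using fcl c(1) .
      have "e = {m' (f c), f' (f c)} \<or> e = {f c, m' (f c)}" using c(2) claimA[OF c(1)]
        by (auto simp: insert_commute)
      thus "e \<in> SS (MC \<mu>')" using S' fc by blast
    qed
  qed
qed

lemma main: "\<exists>S :: 'a set set \<Rightarrow> 'a set set.
    (\<forall>\<mu>. perfect_matching V E \<mu> \<longrightarrow>
        S \<mu> \<noteq> {} \<and> S \<mu> \<subseteq> E \<and>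
        (\<exists>xs. simple_cycle V E xs \<and> even (length xs) \<and> S \<mu> = cycle_edges xs \<and>
              (\<forall>i < length xs. even i \<longrightarrow> {xs ! i, xs ! ((i + 1) mod length xs)} \<in> \<mu>))) \<and>
    (\<forall>\<mu> \<mu>'. perfect_matching V E \<mu> \<longrightarrow> perfect_matching V E \<mu>' \<longrightarrow>
        {e \<in> \<mu>. e \<inter> C \<noteq> {}} = {e \<in> \<mu>'. e \<inter> C \<noteq> {}} \<longrightarrow> S \<mu> = S \<mu>') \<and>
    (\<forall>\<mu> \<mu>'. perfect_matching V E \<mu> \<longrightarrow> perfect_matching V E \<mu>' \<longrightarrow>
        S \<mu> = sym_diff \<mu> \<mu>' \<longrightarrow> S \<mu>' = S \<mu>)"
proof (intro exI[of _ "\<lambda>\<mu>. SS (MC \<mu>)"] conjI allI impI)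
  fix \<mu> assume pm: "perfect_matching V E \<mu>"
  obtain ts cs where r: "rho (nx (MC \<mu>)) c0 ts cs" using rho_ex[OF pm] by blast
  obtain xs where xs: "simple_cycle V E xs" "even (length xs)" "SS (MC \<mu>) = cycle_edges xs"
     "\<forall>i < length xs. even i \<longrightarrow> {xs ! i, xs ! ((i + 1) mod length xs)} \<in> \<mu>"
    using part1[OF pm r] by blast
  have "length xs \<ge> 3" using xs(1) unfolding simple_cycle_def by simp
  hence "{xs!0, xs!((0+1) mod length xs)} \<in> cycle_edges xs" using ce_mem[of 0 xs] by (metis add_0 less_le_trans zero_less_numeral)
  thus "SS (MC \<mu>) \<noteq> {}" using xs(3) by blast
  show "SS (MC \<mu>) \<subseteq> E"
  proof
    fix e assume "e \<in> SS (MC \<mu>)"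
    then obtain i where "i < length xs" "e = {xs!i, xs!((i+1) mod length xs)}"
      using xs(3) unfolding cycle_edges_def by blast
    thus "e \<in> E" using xs(1) unfolding simple_cycle_def by blast
  qed
  show "\<exists>xs. simple_cycle V E xs \<and> even (length xs) \<and> SS (MC \<mu>) = cycle_edges xs \<and>
        (\<forall>i < length xs. even i \<longrightarrow> {xs ! i, xs ! ((i + 1) mod length xs)} \<in> \<mu>)"
    using xs by blast
next
  fix \<mu> \<mu>' :: "'a set set"
  assume "{e \<in> \<mu>. e \<inter> C \<noteq> {}} = {e \<in> \<mu>'. e \<inter> C \<noteq> {}}"
  thus "SS (MC \<mu>) = SS (MC \<mu>')" unfolding MC_def by simp
next
  fix \<mu> \<mu>' assume "perfect_matching V E \<mu>" "perfect_matching V E \<mu>'" "SS (MC \<mu>) = sym_diff \<mu> \<mu>'"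
  thus "SS (MC \<mu>') = SS (MC \<mu>)" by (rule part4)
qed

end

theorem theorem5p2:
  fixes V :: "'a set" and E :: "'a set set" and C :: "'a set"
  assumes "simple_graph V E" and "bipartite V E"
    and "channel V E C" and "C \<noteq> {}"
  shows "\<exists>S :: 'a set set \<Rightarrow> 'a set set.
    (\<forall>\<mu>. perfect_matching V E \<mu> \<longrightarrow>
        S \<mu> \<noteq> {} \<and> S \<mu> \<subseteq> E \<and>
        (\<exists>xs. simple_cycle V E xs \<and> even (length xs) \<and> S \<mu> = cycle_edges xs \<and>
              (\<forall>i < length xs. even i \<longrightarrow> {xs ! i, xs ! ((i + 1) mod length xs)} \<in> \<mu>))) \<and>
    (\<forall>\<mu> \<mu>'. perfect_matching V E \<mu> \<longrightarrow> perfect_matching V E \<mu>' \<longrightarrow>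
        {e \<in> \<mu>. e \<inter> C \<noteq> {}} = {e \<in> \<mu>'. e \<inter> C \<noteq> {}} \<longrightarrow> S \<mu> = S \<mu>') \<and>
    (\<forall>\<mu> \<mu>'. perfect_matching V E \<mu> \<longrightarrow> perfect_matching V E \<mu>' \<longrightarrow>
        S \<mu> = sym_diff \<mu> \<mu>' \<longrightarrow> S \<mu>' = S \<mu>)"
proof -
  have finV: "finite V" using assms(1) unfolding simple_graph_def by blast
  have CV: "C \<subseteq> V" and evn: "\<forall>v\<in>V. even (card {u\<in>C. {u, v} \<in> E})"
    using assms(3) unfolding channel_def by blast+
  obtain c0 where c0: "c0 \<in> C" using assms(4) by blast
  obtain X0 Y0 where XY0: "X0 \<union> Y0 = V" "X0 \<inter> Y0 = {}"
    "\<forall>e\<in>E. \<exists>x y. x \<in> X0 \<and> y \<in> Y0 \<and> e = {x, y}"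
    using assms(2) unfolding bipartite_def by blast
  have "\<exists>X Y. X \<union> Y = V \<and> X \<inter> Y = {} \<and> (\<forall>e\<in>E. \<exists>x y. x \<in> X \<and> y \<in> Y \<and> e = {x, y}) \<and> c0 \<in> X"
  proof (cases "c0 \<in> X0")
    case True thus ?thesis using XY0 by blast
  next
    case False
    hence "c0 \<in> Y0" using XY0(1) c0 CV by blast
    moreover have "\<forall>e\<in>E. \<exists>x y. x \<in> Y0 \<and> y \<in> X0 \<and> e = {x, y}"
      using XY0(3) by (metis insert_commute)
    ultimately show ?thesis using XY0(1,2) by (metis inf_commute sup_commute)
  qed
  then obtain X Y where XY: "X \<union> Y = V" "X \<inter> Y = {}"
    "\<forall>e\<in>E. \<exists>x y. x \<in> X \<and> y \<in> Y \<and> e = {x, y}" "c0 \<in> X" by blast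
  interpret chan V E C X Y c0
    using finV XY CV evn c0 by unfold_locales auto
  show ?thesis by (rule main)
qed

end
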